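(* Let $n \ge 3$. (i) Every $(n-1)$-limited rigid word is an isoterm for $\mathbf{A}_n$; in particular every word in $\mathsf{B}_n$ is an isoterm for $\mathbf{A}_n$. (ii) Every $(n-2)$-limited rigid word is an isoterm for $\mathbf{A}_n\{\mathtt{B}_n\}$.
   Context: All varieties are varieties of monoids (signature: associative binary operation and identity constant $1$). Words are elements of the free monoid $X^*$ over a countably infinite set $X$ of variables; identities are pairs of words, and variables may be substituted by $1$. For a variety $\mathbf{V}$ and set $\Sigma$ of identities, $\mathbf{V}\Sigma$ is the subvariety of $\mathbf{V}$ defined by $\Sigma$. $\mathbf{O}$ is the variety defined by $xyt_1xt_2y \approx yxt_1xt_2y$, $xt_1xyt_2y \approx xt_1yxt_2y$, $xt_1yt_2xy \approx xt_1yt_2yx$. For $n\ge3$, $\mathtt{A}_n$ is $x^n t_1\cdots t_n \approx t_1x\,t_2x\cdots t_nx$, $\mathtt{B}_n$ is the set of identities $x^{n-1}t \approx x^{n-2}tx \approx\cdots\approx xtx^{n-2}\approx tx^{n-1}$, $\mathbf{A}_n=\mathbf{O}\{\mathtt{A}_n\}$, and $\mathsf{B}_n=\{x^{n-1-j}tx^{j}:0\le j\le n-1\}$. A rigid word is a word $x^{e_0}t_1x^{e_1}t_2x^{e_2}\cdots t_rx^{e_r}$ with $r\ge0$, $e_i\ge0$, and $x,t_1,\dots,t_r$ distinct variables; it is $k$-limited if $e_0+\cdots+e_r\le k$. A word $\mathbf{w}$ is an isoterm for a variety $\mathbf{V}$ if $\mathbf{V}$ satisfies no identity $\mathbf{w}\approx\mathbf{v}$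 with $\mathbf{v}\ne\mathbf{w}$. *)

theory Defs
  imports Main
begin

text \<open>Variables are natural numbers (a countably infinite set); words are
elements of the free monoid, i.e. lists of variables; the empty list is 1.\<close>

type_synonym word = "nat list"

definition subst_word :: "(nat \<Rightarrow> word) \<Rightarrow> word \<Rightarrow> word" where
  "subst_word \<sigma> w = concat (map \<sigma> w)"

text \<open>Equational consequence (Birkhoff): the fully invariant congruence on the
free monoid generated by a set of identities. A monoid variety defined by
Sigma satisfies u = v iff this relation holds. Substitutions may send
variables to the empty word 1.\<close>

inductive derivable :: "(word \<times> word) set \<Rightarrow> word \<Rightarrow> word \<Rightarrow> bool"
  for \<Sigma> :: "(word \<times> word) set" where
  ax: "(u, v) \<in> \<Sigma> \<Longrightarrow> derivable \<Sigma> u v"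
| refl: "derivable \<Sigma> u u"
| sym: "derivable \<Sigma> u v \<Longrightarrow> derivable \<Sigma> v u"
| trans: "derivable \<Sigma> u v \<Longrightarrow> derivable \<Sigma> v w \<Longrightarrow> derivable \<Sigma> u w"
| subst: "derivable \<Sigma> u v \<Longrightarrow> derivable \<Sigma> (subst_word \<sigma> u) (subst_word \<sigma> v)"
| ctx: "derivable \<Sigma> u v \<Longrightarrow> derivable \<Sigma> (p @ u @ q) (p @ v @ q)"

definition isoterm :: "(word \<times> word) set \<Rightarrow> word \<Rightarrow> bool" where
  "isoterm \<Sigma> w \<longleftrightarrow> (\<forall>v. derivable \<Sigma> w v \<longrightarrow> v = w)"

text \<open>Variables: x = 0, y = 1, t1 = 2, t2 = 3.\<close>
definition O_ids :: "(word \<times> word) set" where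
  "O_ids = {([0,1,2,0,3,1], [1,0,2,0,3,1]),
            ([0,2,0,1,3,1], [0,2,1,0,3,1]),
            ([0,2,1,3,0,1], [0,2,1,3,1,0])}"

text \<open>A_n: x^n t1 ... tn = t1 x t2 x ... tn x, with x = 0 and ti = i.\<close>
definition A_id :: "nat \<Rightarrow> word \<times> word" where
  "A_id n = (replicate n 0 @ [1..<n+1], concat (map (\<lambda>i. [i, 0]) [1..<n+1]))"

text \<open>B_n words: x^(n-1-j) t x^j, with x = 0, t = 1.\<close>
definition B_word :: "nat \<Rightarrow> nat \<Rightarrow> word" where
  "B_word n j = replicate (n - 1 - j) 0 @ [1] @ replicate j 0"

definition B_words :: "nat \<Rightarrow> word set" where
  "B_words n = {B_word n j | j. j \<le> n - 1}"

definition B_ids :: "nat \<Rightarrow> (word \<times> word) set" where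
  "B_ids n = {(B_word n 0, B_word n j) | j. j \<le> n - 1}"

text \<open>Defining identities of A_n = O{A_n} and of A_n{B_n}.\<close>
definition A_var :: "nat \<Rightarrow> (word \<times> word) set" where
  "A_var n = O_ids \<union> {A_id n}"

definition AB_var :: "nat \<Rightarrow> (word \<times> word) set" where
  "AB_var n = A_var n \<union> B_ids n"

text \<open>k-limited rigid words x^e0 t1 x^e1 ... tr x^er.\<close>
definition rigid_limited :: "nat \<Rightarrow> word \<Rightarrow> bool" where
  "rigid_limited k w \<longleftrightarrow> (\<exists>x ts es. distinct (x # ts) \<and> length es = length ts + 1 \<and>
     w = replicate (es ! 0) x @
         concat (map (\<lambda>i. ts ! i # replicate (es ! (i + 1)) x) [0..<length ts]) \<and>
     sum_list es \<le> k)"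

end

theory Submission
  imports Defs
begin

lemma subst_word_simps[simp]:
  "subst_word \<sigma> [] = []"
  "subst_word \<sigma> (z # u) = \<sigma> z @ subst_word \<sigma> u"
  "subst_word \<sigma> (u @ v) = subst_word \<sigma> u @ subst_word \<sigma> v"
  by (simp_all add: subst_word_def)

lemma subst_word_comp:
  "subst_word \<sigma>' (subst_word \<sigma> u) = subst_word (\<lambda>z. subst_word \<sigma>' (\<sigma> z)) u"
  by (induction u) auto

lemma subst_word_id: "subst_word (\<lambda>z. [z]) u = u"
  by (induction u) auto

lemma isoterm_crit:
  assumes A: "\<And>a b \<sigma> p q. (a,b) \<in> \<Sigma> \<Longrightarrow> p @ subst_word \<sigma> a @ q = w \<Longrightarrow> p @ subst_word \<sigma> b @ q = w"
      and B: "\<And>a b \<sigma> p q. (a,b) \<in> \<Sigma> \<Longrightarrow> p @ subst_word \<sigma> b @ q = w \<Longrightarrow> p @ subst_word \<sigma> a @ q = w"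
  shows "isoterm \<Sigma> w"
proof -
  have I: "\<forall>\<sigma> p q. (p @ subst_word \<sigma> u @ q = w) = (p @ subst_word \<sigma> v @ q = w)"
    if "derivable \<Sigma> u v" for u v
    using that
  proof (induction rule: derivable.induct)
    case (ax u v)
    then show ?case using A B by blast
  next
    case (subst u v \<sigma>)
    then show ?case by (simp add: subst_word_comp)
  next
    case (ctx u v p q)
    show ?case
    proof (intro allI)
      fix \<sigma> p' q'
      show "(p' @ subst_word \<sigma> (p @ u @ q) @ q' = w) = (p' @ subst_word \<sigma> (p @ v @ q) @ q' = w)"
      proof -
        have "((p' @ subst_word \<sigma> p) @ subst_word \<sigma> u @ (subst_word \<sigma> q @ q') = w) =
              ((p' @ subst_word \<sigma> p) @ subst_word \<sigma> v @ (subst_word \<sigma> q @ q') = w)"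
          using ctx.IH by blast
        then show ?thesis by simp
      qed
    qed
  qed auto
  show ?thesis unfolding isoterm_def
  proof (intro allI impI)
    fix v assume "derivable \<Sigma> w v"
    have "([] @ subst_word (\<lambda>z. [z]) w @ [] = w) = ([] @ subst_word (\<lambda>z. [z]) v @ [] = w)"
      using I[OF \<open>derivable \<Sigma> w v\<close>] by blast
    then show "v = w" by (simp add: subst_word_id)
  qed
qed

lemma count_sum_ge: "count_list a z * count_list (\<sigma> z) c \<le> count_list (subst_word \<sigma> a) c"
  by (induction a) auto

definition rig :: "nat \<Rightarrow> word \<Rightarrow> bool" where
  "rig k w \<longleftrightarrow> (\<exists>x0. \<forall>c. count_list w c \<le> (if c = x0 then k else 1))"

lemma key:
  assumes "p @ subst_word \<sigma> a @ q = w" "c \<in> set (\<sigma> z)"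
  shows "count_list a z \<le> count_list w c"
proof -
  have "1 \<le> count_list (\<sigma> z) c" using assms(2)
    by (metis count_list_0_iff less_one not_le)
  hence "count_list a z \<le> count_list a z * count_list (\<sigma> z) c" by simp
  also have "\<dots> \<le> count_list (subst_word \<sigma> a) c" by (rule count_sum_ge)
  also have "\<dots> \<le> count_list w c" using assms(1) by auto
  finally show ?thesis .
qed

lemma pow_x0:
  assumes "rig k w" "p @ subst_word \<sigma> a @ q = w" "count_list a z \<ge> 2"
  shows "\<exists>x0 m. \<sigma> z = replicate m x0 \<and> (\<forall>c. c \<noteq> x0 \<longrightarrow> count_list w c \<le> 1)"
proof -
  obtain x0 where x0: "\<forall>c. count_list w c \<le> (if c = x0 then k else 1)"
    using assms(1) rig_def by blast
  have "set (\<sigma> z) \<subseteq> {x0}"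
  proof
    fix c assume "c \<in> set (\<sigma> z)"
    from key[OF assms(2) this] assms(3) have "2 \<le> count_list w c" by simp
    with x0[rule_format, of c] show "c \<in> {x0}" by (auto split: if_splits)
  qed
  hence "\<sigma> z = replicate (length (\<sigma> z)) x0"
    by (metis replicate_length_same singletonD subsetD)
  with x0 show ?thesis by (metis (full_types) )
qed

lemma O_ok:
  assumes "rig k w" "(a,b) \<in> O_ids" "p @ subst_word \<sigma> a @ q = w"
  shows "p @ subst_word \<sigma> b @ q = w"
proof -
  have c: "count_list a 0 \<ge> 2" "count_list a 1 \<ge> 2" using assms(2) by (auto simp: O_ids_def)
  obtain x0 m where m: "\<sigma> 0 = replicate m x0" "\<forall>c. c \<noteq> x0 \<longrightarrow> count_list w c \<le> 1"
    using pow_x0[OF assms(1,3) c(1)] by blast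
  obtain x1 m' where m': "\<sigma> 1 = replicate m' x1" "\<forall>c. c \<noteq> x1 \<longrightarrow> count_list w c \<le> 1"
    using pow_x0[OF assms(1,3) c(2)] by blast
  have "\<sigma> 0 @ \<sigma> 1 = \<sigma> 1 @ \<sigma> 0"
  proof (cases "m = 0 \<or> m' = 0")
    case True then show ?thesis using m m' by auto
  next
    case False
    then obtain c0 where "c0 \<in> set (\<sigma> 0)" using m by auto
    from key[OF assms(3) this] c have "2 \<le> count_list w c0" by simp
    hence "x0 = x1" using m m' False \<open>c0 \<in> set (\<sigma> 0)\<close> by fastforce
    then show ?thesis using m m' by (simp add: replicate_add[symmetric] add.commute)
  qed
  hence e0: "\<sigma> (Suc 0) @ \<sigma> 0 = \<sigma> 0 @ \<sigma> (Suc 0)" by simp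
  hence e: "\<sigma> (Suc 0) @ \<sigma> 0 @ r = \<sigma> 0 @ \<sigma> (Suc 0) @ r" for r by (metis append.assoc)
  have "subst_word \<sigma> b = subst_word \<sigma> a" using assms(2)
    by (auto simp: O_ids_def e e0)
  then show ?thesis using assms(3) by simp
qed

lemma O_ok':
  assumes "rig k w" "(a,b) \<in> O_ids" "p @ subst_word \<sigma> b @ q = w"
  shows "p @ subst_word \<sigma> a @ q = w"
proof -
  have "(b,a) \<in> {(b,a). (a,b) \<in> O_ids}" using assms(2) by simp
  have c: "count_list b 0 \<ge> 2" "count_list b 1 \<ge> 2" using assms(2) by (auto simp: O_ids_def)
  obtain x0 m where m: "\<sigma> 0 = replicate m x0" "\<forall>c. c \<noteq> x0 \<longrightarrow> count_list w c \<le> 1"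
    using pow_x0[OF assms(1,3) c(1)] by blast
  obtain x1 m' where m': "\<sigma> 1 = replicate m' x1" "\<forall>c. c \<noteq> x1 \<longrightarrow> count_list w c \<le> 1"
    using pow_x0[OF assms(1,3) c(2)] by blast
  have "\<sigma> 0 @ \<sigma> 1 = \<sigma> 1 @ \<sigma> 0"
  proof (cases "m = 0 \<or> m' = 0")
    case True then show ?thesis using m m' by auto
  next
    case False
    then obtain c0 where "c0 \<in> set (\<sigma> 0)" using m by auto
    from key[OF assms(3) this] c have "2 \<le> count_list w c0" by simp
    hence "x0 = x1" using m m' False \<open>c0 \<in> set (\<sigma> 0)\<close> by fastforce
    then show ?thesis using m m' by (simp add: replicate_add[symmetric] add.commute)
  qed
  hence e0: "\<sigma> (Suc 0) @ \<sigma> 0 = \<sigma> 0 @ \<sigma> (Suc 0)" by simp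
  hence e: "\<sigma> (Suc 0) @ \<sigma> 0 @ r = \<sigma> 0 @ \<sigma> (Suc 0) @ r" for r by (metis append.assoc)
  have "subst_word \<sigma> b = subst_word \<sigma> a" using assms(2)
    by (auto simp: O_ids_def e e0)
  then show ?thesis using assms(3) by simp
qed

lemma empty_var:
  assumes "rig k w" "p @ subst_word \<sigma> a @ q = w" "count_list a z > k" "count_list a z \<ge> 2"
  shows "\<sigma> z = []"
proof (rule ccontr)
  assume "\<sigma> z \<noteq> []"
  then obtain c where c: "c \<in> set (\<sigma> z)" by (cases "\<sigma> z") auto
  obtain x0 where x0: "\<forall>c. count_list w c \<le> (if c = x0 then k else 1)"
    using assms(1) rig_def by blast
  from key[OF assms(2) c] have "count_list a z \<le> count_list w c" .
  with x0[rule_format, of c] assms(3,4) show False by (auto split: if_splits)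
qed

lemma count_A_rhs: "0 \<notin> set L \<Longrightarrow> count_list (concat (map (\<lambda>i. [i, 0::nat]) L)) 0 = length L"
  by (induction L) auto

lemma subst_A_rhs: "\<sigma> 0 = [] \<Longrightarrow> subst_word \<sigma> (concat (map (\<lambda>i. [i, 0::nat]) L)) = subst_word \<sigma> L"
  by (induction L) auto

lemma subst_rep: "\<sigma> 0 = [] \<Longrightarrow> subst_word \<sigma> (replicate m (0::nat)) = []"
  by (induction m) auto

lemma count_upt: "count_list [Suc 0..<m] 0 = 0"
  by (simp)

lemma A_ok:
  assumes "rig k w" "k < n" "n \<ge> 2" "(a,b) = A_id n"
  shows "(p @ subst_word \<sigma> a @ q = w) = (p @ subst_word \<sigma> b @ q = w)"
proof -
  have ca: "count_list a 0 = n" using assms(4)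
    by (auto simp: A_id_def count_list_eq_length_filter)
  have cb: "count_list b 0 = n" using assms(4)
    by (auto simp: A_id_def count_A_rhs)
  have eq: "subst_word \<sigma> a = subst_word \<sigma> b" if "\<sigma> 0 = []"
    using assms(4) that by (auto simp: A_id_def subst_A_rhs subst_rep)
  show ?thesis
  proof
    assume h: "p @ subst_word \<sigma> a @ q = w"
    have "\<sigma> 0 = []" by (rule empty_var[OF assms(1) h]) (use ca assms in auto)
    then show "p @ subst_word \<sigma> b @ q = w" using h eq by simp
  next
    assume h: "p @ subst_word \<sigma> b @ q = w"
    have "\<sigma> 0 = []" by (rule empty_var[OF assms(1) h]) (use cb assms in auto)
    then show "p @ subst_word \<sigma> a @ q = w" using h eq by simp
  qed
qed

lemma count_B: "j \<le> n - 1 \<Longrightarrow> count_list (B_word n j) 0 = n - 1"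
  by (simp add: B_word_def count_list_eq_length_filter)

lemma subst_B: "\<sigma> 0 = [] \<Longrightarrow> subst_word \<sigma> (B_word n j) = \<sigma> 1"
  by (simp add: B_word_def subst_rep)

lemma B_ok:
  assumes "rig k w" "k < n - 1" "n \<ge> 3" "(a,b) \<in> B_ids n"
  shows "(p @ subst_word \<sigma> a @ q = w) = (p @ subst_word \<sigma> b @ q = w)"
proof -
  obtain j where j: "a = B_word n 0" "b = B_word n j" "j \<le> n - 1"
    using assms(4) by (auto simp: B_ids_def)
  have ca: "count_list a 0 = n - 1" "count_list b 0 = n - 1" using j count_B by auto
  have eq: "subst_word \<sigma> a = subst_word \<sigma> b" if "\<sigma> 0 = []"
    using j that by (simp add: subst_B)
  show ?thesis
  proof
    assume h: "p @ subst_word \<sigma> a @ q = w"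
    have "\<sigma> 0 = []" by (rule empty_var[OF assms(1) h]) (use ca assms in auto)
    then show "p @ subst_word \<sigma> b @ q = w" using h eq by simp
  next
    assume h: "p @ subst_word \<sigma> b @ q = w"
    have "\<sigma> 0 = []" by (rule empty_var[OF assms(1) h]) (use ca assms in auto)
    then show "p @ subst_word \<sigma> a @ q = w" using h eq by simp
  qed
qed

lemma A_iso: assumes "rig k w" "k < n" "n \<ge> 3" shows "isoterm (A_var n) w"
proof (rule isoterm_crit)
  fix a b \<sigma> p q assume ab: "(a,b) \<in> A_var n"
  hence c: "(a,b) \<in> O_ids \<or> (a,b) = A_id n" unfolding A_var_def by auto
  have n2: "n \<ge> 2" using assms by simp
  show "p @ subst_word \<sigma> a @ q = w \<Longrightarrow> p @ subst_word \<sigma> b @ q = w"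
    using c A_ok[OF assms(1,2) n2, of a b p \<sigma> q] O_ok[OF assms(1)] by blast
  show "p @ subst_word \<sigma> b @ q = w \<Longrightarrow> p @ subst_word \<sigma> a @ q = w"
    using c A_ok[OF assms(1,2) n2, of a b p \<sigma> q] O_ok'[OF assms(1)] by blast
qed

lemma AB_iso: assumes "rig k w" "k < n - 1" "n \<ge> 3" shows "isoterm (AB_var n) w"
proof (rule isoterm_crit)
  have k: "k < n" using assms by simp
  have n2: "n \<ge> 2" using assms by simp
  fix a b \<sigma> p q assume ab: "(a,b) \<in> AB_var n"
  hence c: "(a,b) \<in> O_ids \<or> (a,b) = A_id n \<or> (a,b) \<in> B_ids n" unfolding AB_var_def A_var_def by auto
  show "p @ subst_word \<sigma> a @ q = w \<Longrightarrow> p @ subst_word \<sigma> b @ q = w"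
    using c A_ok[OF assms(1) k n2, of a b p \<sigma> q] O_ok[OF assms(1)]
      B_ok[OF assms(1,2,3), of a b p \<sigma> q] by blast
  show "p @ subst_word \<sigma> b @ q = w \<Longrightarrow> p @ subst_word \<sigma> a @ q = w"
    using c A_ok[OF assms(1) k n2, of a b p \<sigma> q] O_ok'[OF assms(1)]
      B_ok[OF assms(1,2,3), of a b p \<sigma> q] by blast
qed

lemma count_rep: "count_list (replicate m x) c = (if x = c then m else 0)"
  by (induction m) auto

lemma count_concat: "count_list (concat (map f L)) c = sum_list (map (\<lambda>i. count_list (f i) c) L)"
  by (induction L) auto

lemma count_distinct: "distinct xs \<Longrightarrow> count_list xs c \<le> 1"
  by (induction xs) auto

lemma rigid_rig: assumes "rigid_limited k w" shows "rig k w"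
proof -
  obtain x ts es where d: "distinct (x # ts)" and l: "length es = length ts + 1"
    and w: "w = replicate (es ! 0) x @
         concat (map (\<lambda>i. ts ! i # replicate (es ! (i + 1)) x) [0..<length ts])"
    and s: "sum_list es \<le> k"
    using assms unfolding rigid_limited_def by blast
  obtain e0 es' where es: "es = e0 # es'" using l by (cases es) auto
  have l': "length es' = length ts" using l es by simp
  have w': "w = replicate e0 x @ concat (map (\<lambda>i. ts ! i # replicate (es' ! i) x) [0..<length ts])"
    using w es by simp
  have cx: "count_list w x = sum_list es"
  proof -
    have "sum_list (map (\<lambda>i. count_list (ts ! i # replicate (es' ! i) x) x) [0..<length ts])
        = sum_list (map (\<lambda>i. es' ! i) [0..<length es'])"
      using d l' by (intro arg_cong[where f=sum_list] map_cong) (auto simp: count_rep)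
    also have "\<dots> = sum_list es'" by (simp add: map_nth)
    finally show ?thesis using es by (simp add: w' count_concat count_rep)
  qed
  have cc: "count_list w c \<le> 1" if "c \<noteq> x" for c
  proof -
    have "sum_list (map (\<lambda>i. count_list (ts ! i # replicate (es' ! i) x) c) [0..<length ts])
        = sum_list (map (\<lambda>i. count_list [ts ! i] c) [0..<length ts])"
      using that by (intro arg_cong[where f=sum_list] map_cong) (auto simp: count_rep)
    also have "\<dots> = count_list (concat (map (\<lambda>i. [ts ! i]) [0..<length ts])) c"
      by (rule count_concat[symmetric])
    also have "\<dots> = count_list ts c"
    proof -
      have "concat (map (\<lambda>i. [ts ! i]) [0..<length ts]) = map ((!) ts) [0..<length ts]"
        by (induction "length ts") auto
      then show ?thesis by (simp add: map_nth)
    qed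
    also have "\<dots> \<le> 1" using d by (intro count_distinct) simp
    finally show ?thesis using that by (simp add: w' count_concat count_rep)
  qed
  show ?thesis unfolding rig_def
    by (rule exI[of _ x]) (use cx cc s in auto)
qed

lemma B_rigid: assumes "j \<le> n - 1" shows "rigid_limited (n - 1) (B_word n j)"
  unfolding rigid_limited_def B_word_def
  by (rule exI[of _ 0], rule exI[of _ "[1]"], rule exI[of _ "[n - 1 - j, j]"]) (use assms in auto)

theorem lemma3p2:
  fixes n :: nat
  assumes "n \<ge> 3"
  shows "(\<forall>w. rigid_limited (n - 1) w \<longrightarrow> isoterm (A_var n) w)
       \<and> (\<forall>w \<in> B_words n. isoterm (A_var n) w)
       \<and> (\<forall>w. rigid_limited (n - 2) w \<longrightarrow> isoterm (AB_var n) w)"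
proof (intro conjI allI impI ballI)
  fix w assume "rigid_limited (n - 1) w"
  then show "isoterm (A_var n) w" using A_iso[OF rigid_rig] assms by simp
next
  fix w assume "w \<in> B_words n"
  then obtain j where "w = B_word n j" "j \<le> n - 1" unfolding B_words_def by blast
  then show "isoterm (A_var n) w" using A_iso[OF rigid_rig[OF B_rigid]] assms by simp
next
  fix w assume "rigid_limited (n - 2) w"
  then show "isoterm (AB_var n) w" using AB_iso[OF rigid_rig] assms by simp
qed

end
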